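(* Let $G=(V,E)$ be an $n$-vertex graph, $q>0$ an integer, $0<\alpha\le1$, and suppose $n\ge q c_q/\alpha^2$, where $c_q=\sum_{i=0}^{q}q^i$. Let $u,v$ be two vertices chosen uniformly at random from $V$, and let $H_u$ and $H_v$ be the subgraphs visited by two (independent) $q$-random BFS starting at $u$ and $v$, respectively. Then with probability at least $1-2\alpha q c_q$, no edge is contained in both $H_u$ and $H_v$.
   Context: $q$-random BFS ($q$-RBFS) from a vertex $v$ in the random neighbor model (where a random neighbor query for $u$ returns a uniformly random neighbor of $u$): initialize a queue $Q=(v)$, level $\ell[v]=0$ (all others $\infty$), and $H=(\{v\},\emptyset)$ rooted at $v$; while $Q$ is nonempty, pop $u$ and make $q$ independent random neighbor queries for $u$ obtaining $s_{u,1},\dots,s_{u,q}$; for each $i$ add $s_{u,i}$ and the edge $\{u,s_{u,i}\}$ to $H$, and if $\ell[u]<q-1$ and $\ell[s_{u,i}]=\infty$, set $\ell[s_{u,i}]=\ell[u]+1$ and enqueue $s_{u,i}$; return $H$ (undirected, simple). *)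

theory Defs
  imports "HOL-Probability.Probability"
begin

definition simple_graph :: "'a set \<Rightarrow> 'a set set \<Rightarrow> bool" where
  "simple_graph V E \<longleftrightarrow> finite V \<and>
     (\<forall>e\<in>E. \<exists>x y. x \<noteq> y \<and> x \<in> V \<and> y \<in> V \<and> e = {x, y})"

definition nbrs :: "'a set set \<Rightarrow> 'a \<Rightarrow> 'a set" where
  "nbrs E u = {w. {u, w} \<in> E}"

definition rn_query :: "'a set set \<Rightarrow> 'a \<Rightarrow> 'a option pmf" where
  "rn_query E u = (if nbrs E u = {} then return_pmf None
                   else map_pmf Some (pmf_of_set (nbrs E u)))"

text \<open>State: (queue, level (None = infinity), vertices of H, edges of H).\<close>
type_synonym 'a rbfs_state = "'a list \<times> ('a \<Rightarrow> nat option) \<times> 'a set \<times> 'a set set"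

fun rbfs_process :: "nat \<Rightarrow> 'a \<Rightarrow> 'a option \<Rightarrow> 'a rbfs_state \<Rightarrow> 'a rbfs_state" where
  "rbfs_process q u None st = st"
| "rbfs_process q u (Some s) (Q, lev, HV, HE) =
     (case lev u of
        Some l \<Rightarrow> if l < q - 1 \<and> lev s = None
                  then (Q @ [s], lev(s := Some (l + 1)), insert s HV, insert {u, s} HE)
                  else (Q, lev, insert s HV, insert {u, s} HE)
      | None \<Rightarrow> (Q, lev, insert s HV, insert {u, s} HE))"

fun rbfs_queries :: "nat \<Rightarrow> 'a set set \<Rightarrow> 'a \<Rightarrow> nat \<Rightarrow> 'a rbfs_state \<Rightarrow> 'a rbfs_state pmf" where
  "rbfs_queries q E u 0 st = return_pmf st"
| "rbfs_queries q E u (Suc k) st =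
     bind_pmf (rn_query E u) (\<lambda>s. rbfs_queries q E u k (rbfs_process q u s st))"

fun rbfs_step :: "nat \<Rightarrow> 'a set set \<Rightarrow> 'a rbfs_state \<Rightarrow> 'a rbfs_state pmf" where
  "rbfs_step q E ([], lev, HV, HE) = return_pmf ([], lev, HV, HE)"
| "rbfs_step q E (u # Q, lev, HV, HE) = rbfs_queries q E u q (Q, lev, HV, HE)"

fun rbfs_iter :: "nat \<Rightarrow> 'a set set \<Rightarrow> nat \<Rightarrow> 'a rbfs_state \<Rightarrow> 'a rbfs_state pmf" where
  "rbfs_iter q E 0 st = return_pmf st"
| "rbfs_iter q E (Suc k) st = bind_pmf (rbfs_step q E st) (rbfs_iter q E k)"

text \<open>q-RBFS from v: each vertex is enqueued at most once, so card V + 1 loop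
  iterations suffice for the queue to be empty; returns H = (vertices, edges).\<close>
definition q_rbfs :: "nat \<Rightarrow> 'a set \<Rightarrow> 'a set set \<Rightarrow> 'a \<Rightarrow> ('a set \<times> 'a set set) pmf" where
  "q_rbfs q V E v =
     map_pmf (\<lambda>(Q, lev, HV, HE). (HV, HE))
       (rbfs_iter q E (card V + 1) ([v], (\<lambda>_. None)(v := Some 0), {v}, {}))"

definition c_q :: "nat \<Rightarrow> real" where
  "c_q q = (\<Sum>i\<le>q. real q ^ i)"

end

theory Submission
  imports Defs
begin


primrec Tp :: "nat \<Rightarrow> 'a set set \<Rightarrow> 'a set \<Rightarrow> nat \<Rightarrow> 'a \<Rightarrow> real" where
  "Tp q E e 0 w = 0"
| "Tp q E e (Suc D) w = real q * (if nbrs E w = {} then 0 else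
     (\<Sum>s\<in>nbrs E w. (if {w,s} = e then 1 else 0) + Tp q E e D s) / card (nbrs E w))"

definition Jp :: "nat \<Rightarrow> 'a set set \<Rightarrow> 'a set \<Rightarrow> nat \<Rightarrow> 'a \<Rightarrow> real" where
  "Jp q E e D w = (if nbrs E w = {} then 0 else
     (\<Sum>s\<in>nbrs E w. (if {w,s} = e then 1 else 0) + Tp q E e D s) / card (nbrs E w))"

lemma Tp_Suc: "Tp q E e (Suc D) w = real q * Jp q E e D w"
  by (simp add: Jp_def)

lemma Tp_nonneg: "0 \<le> Tp q E e D w"
proof (induction D arbitrary: w)
  case 0 then show ?case by simp
next
  case (Suc D)
  have "0 \<le> (\<Sum>s\<in>nbrs E w. (if {w,s} = e then 1 else 0) + Tp q E e D s)"
    by (intro sum_nonneg add_nonneg_nonneg) (simp_all add: Suc.IH)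
  then show ?case by auto
qed

lemma Jp_nonneg: "0 \<le> Jp q E e D w"
  unfolding Jp_def using Tp_nonneg[of q E e D]
  by (auto intro!: divide_nonneg_nonneg sum_nonneg add_nonneg_nonneg simp: if_split)

lemma Tp_mono_Suc: "Tp q E e D w \<le> Tp q E e (Suc D) w"
proof (induction D arbitrary: w)
  case 0 then show ?case using Tp_nonneg[of q E e "Suc 0" w] by simp
next
  case (Suc D)
  have "(\<Sum>s\<in>nbrs E w. (if {w,s} = e then 1 else 0) + Tp q E e D s)
     \<le> (\<Sum>s\<in>nbrs E w. (if {w,s} = e then 1 else 0) + Tp q E e (Suc D) s)"
    by (intro sum_mono) (use Suc in auto)
  then show ?case unfolding Tp_Suc Jp_def
    by (auto intro!: mult_left_mono divide_right_mono)
qed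

lemma Tp_mono: "D \<le> D' \<Longrightarrow> Tp q E e D w \<le> Tp q E e D' w"
proof (induction D' rule: dec_induct)
  case base then show ?case by simp
next
  case (step n) then show ?case using Tp_mono_Suc[of q E e n w] by linarith
qed

definition dep :: "nat \<Rightarrow> nat option \<Rightarrow> nat" where
  "dep q l = (case l of None \<Rightarrow> q | Some l \<Rightarrow> max 1 (q - l))"

definition sumT :: "nat \<Rightarrow> 'a set set \<Rightarrow> 'a set \<Rightarrow> ('a \<Rightarrow> nat option) \<Rightarrow> 'a list \<Rightarrow> real" where
  "sumT q E e lev Q = sum_list (map (\<lambda>w. Tp q E e (dep q (lev w)) w) Q)"

lemma sumT_nonneg: "0 \<le> sumT q E e lev Q"
  unfolding sumT_def by (induction Q) (auto intro: add_nonneg_nonneg Tp_nonneg)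

lemma sumT_mono:
  assumes "\<And>w. dep q (lev' w) \<le> dep q (lev w)"
  shows "sumT q E e lev' Q \<le> sumT q E e lev Q"
  unfolding sumT_def by (induction Q) (auto intro: add_mono Tp_mono assms)

fun Phi :: "nat \<Rightarrow> 'a set set \<Rightarrow> 'a set \<Rightarrow> 'a rbfs_state \<Rightarrow> ennreal" where
  "Phi q E e (Q, lev, HV, HE) = (if e \<in> HE then 1 else ennreal (sumT q E e lev Q))"

lemma rn_int:
  assumes "finite (nbrs E w)" "\<And>x. 0 \<le> f x"
  shows "(\<integral>\<^sup>+s. ennreal (f s) \<partial>rn_query E w) =
     ennreal (if nbrs E w = {} then f None else (\<Sum>s\<in>nbrs E w. f (Some s)) / card (nbrs E w))"
proof (cases "nbrs E w = {}")
  case True then show ?thesis by (simp add: rn_query_def assms)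
next
  case False
  have "(\<integral>\<^sup>+s. ennreal (f s) \<partial>rn_query E w) = (\<Sum>s\<in>nbrs E w. ennreal (f (Some s))) / card (nbrs E w)"
    using False assms by (simp add: rn_query_def nn_integral_pmf_of_set)
  also have "\<dots> = ennreal ((\<Sum>s\<in>nbrs E w. f (Some s)) / card (nbrs E w))"
  proof -
    have c: "0 < real (card (nbrs E w))" using False assms(1) by (simp add: card_gt_0_iff)
    have "0 \<le> (\<Sum>s\<in>nbrs E w. f (Some s))" by (intro sum_nonneg) (use assms in auto)
    then show ?thesis using c assms(2)
      by (subst sum_ennreal) (auto simp: divide_ennreal ennreal_of_nat_eq_real_of_nat)
  qed
  finally show ?thesis using False by simp
qed

lemma sumT_append: "sumT q E e lev (Q @ [s]) = sumT q E e lev Q + Tp q E e (dep q (lev s)) s"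
  by (simp add: sumT_def)

lemma process_facts:
  assumes "q > 0" "dep q (lev u) = Suc D"
    and "rbfs_process q u (Some s) (Q, lev, HV, HE) = (Q', lev', HV', HE')"
  shows "lev' u = lev u \<and> HE' = insert {u, s} HE \<and> sumT q E e lev' Q' \<le> sumT q E e lev Q + Tp q E e D s"
proof (cases "lev u")
  case None
  then show ?thesis using assms Tp_nonneg[of q E e D s] by auto
next
  case (Some l)
  show ?thesis
  proof (cases "l < q - 1 \<and> lev s = None")
    case True
    have D: "D = q - l - 1" using assms(2) Some True unfolding dep_def by auto
    have eqs: "Q' = Q @ [s]" "lev' = lev(s := Some (l + 1))" "HE' = insert {u, s} HE"
      using assms(3) Some True by auto
    have su: "s \<noteq> u" using True Some by auto
    have dep_s: "dep q (lev' s) = D" using D True unfolding eqs dep_def by auto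
    have "sumT q E e lev' Q \<le> sumT q E e lev Q"
      by (rule sumT_mono) (use True in \<open>auto simp: eqs dep_def\<close>)
    then show ?thesis using su dep_s by (simp add: eqs sumT_append)
  next
    case False
    then show ?thesis using assms Some Tp_nonneg[of q E e D s] by auto
  qed
qed

fun Psi :: "nat \<Rightarrow> 'a set set \<Rightarrow> 'a set \<Rightarrow> nat \<Rightarrow> 'a \<Rightarrow> nat \<Rightarrow> 'a rbfs_state \<Rightarrow> ennreal" where
  "Psi q E e D u k (Q, lev, HV, HE) = (if e \<in> HE then 1 else ennreal (sumT q E e lev Q + real k * Jp q E e D u))"

lemma process_lev: "rbfs_process q u s (Q, lev, HV, HE) = (Q', lev', HV', HE') \<Longrightarrow> lev u \<noteq> None \<Longrightarrow> lev' u = lev u"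
  by (cases s) (auto split: option.splits if_splits)

lemma process_HE: "rbfs_process q u s (Q, lev, HV, HE) = (Q', lev', HV', HE') \<Longrightarrow> HE \<subseteq> HE'"
  by (cases s) (auto split: option.splits if_splits)

definition gq :: "nat \<Rightarrow> 'a set set \<Rightarrow> 'a set \<Rightarrow> nat \<Rightarrow> 'a \<Rightarrow> real \<Rightarrow> 'a option \<Rightarrow> real" where
  "gq q E e D u A s = (case s of None \<Rightarrow> A | Some s' \<Rightarrow> A + ((if {u,s'} = e then 1 else 0) + Tp q E e D s'))"

lemma gq_nonneg: "0 \<le> A \<Longrightarrow> 0 \<le> gq q E e D u A s"
  using Tp_nonneg[of q E e D] by (auto simp: gq_def split: option.splits intro: add_nonneg_nonneg)

lemma Psi_process:
  assumes "q > 0" "dep q (lev u) = Suc D" "e \<notin> HE"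
  shows "Psi q E e D u k (rbfs_process q u s (Q, lev, HV, HE))
     \<le> ennreal (gq q E e D u (sumT q E e lev Q + real k * Jp q E e D u) s)"
proof (cases s)
  case None
  then show ?thesis using assms by (simp add: gq_def)
next
  case (Some s')
  obtain Q' lev' HV' HE' where P: "rbfs_process q u (Some s') (Q, lev, HV, HE) = (Q', lev', HV', HE')"
    by (metis prod_cases4)
  note F = process_facts[OF assms(1,2) P, of E e]
  have nn: "0 \<le> sumT q E e lev Q + real k * Jp q E e D u"
    using sumT_nonneg[of q E e lev Q] Jp_nonneg[of q E e D u] by simp
  show ?thesis
  proof (cases "e \<in> HE'")
    case True
    then have "e = {u, s'}" using F assms(3) by auto
    moreover have "0 \<le> Tp q E e D s'" by (rule Tp_nonneg)
    ultimately show ?thesis using True P Some nn by (auto simp: gq_def)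
  next
    case False
    have "sumT q E e lev' Q' + real k * Jp q E e D u \<le> gq q E e D u (sumT q E e lev Q + real k * Jp q E e D u) s"
      using F Some by (simp add: gq_def)
    then show ?thesis using False P Some by (simp add: ennreal_leI)
  qed
qed

lemma queries_bound:
  assumes "q > 0" "finite (nbrs E u)"
  shows "dep q (lev u) = Suc D \<Longrightarrow>
    (\<integral>\<^sup>+x. Phi q E e x \<partial>rbfs_queries q E u k (Q, lev, HV, HE)) \<le> Psi q E e D u k (Q, lev, HV, HE)"
proof (induction k arbitrary: Q lev HV HE)
  case 0
  then show ?case by simp
next
  case (Suc k)
  have step: "(\<integral>\<^sup>+x. Phi q E e x \<partial>rbfs_queries q E u k (rbfs_process q u s (Q, lev, HV, HE)))
       \<le> Psi q E e D u k (rbfs_process q u s (Q, lev, HV, HE))" for s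
  proof -
    obtain Q' lev' HV' HE' where P: "rbfs_process q u s (Q, lev, HV, HE) = (Q', lev', HV', HE')"
      by (metis prod_cases4)
    have "lev' u = lev u"
    proof (cases s)
      case None then show ?thesis using P by simp
    next
      case (Some s') then show ?thesis using process_facts[where E=E and e=e and lev=lev and u=u and s=s', OF assms(1) Suc.prems] P Some by simp
    qed
    then show ?thesis using Suc.IH[of lev' Q' HV' HE'] Suc.prems P by simp
  qed
  have "(\<integral>\<^sup>+x. Phi q E e x \<partial>rbfs_queries q E u (Suc k) (Q, lev, HV, HE))
     = (\<integral>\<^sup>+s. (\<integral>\<^sup>+x. Phi q E e x \<partial>rbfs_queries q E u k (rbfs_process q u s (Q, lev, HV, HE))) \<partial>rn_query E u)"
    by simp
  also have "\<dots> \<le> (\<integral>\<^sup>+s. Psi q E e D u k (rbfs_process q u s (Q, lev, HV, HE)) \<partial>rn_query E u)"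
    by (intro nn_integral_mono step)
  also have "\<dots> \<le> Psi q E e D u (Suc k) (Q, lev, HV, HE)"
  proof (cases "e \<in> HE")
    case True
    have "Psi q E e D u k (rbfs_process q u s (Q, lev, HV, HE)) = 1" for s
    proof -
      obtain Q' lev' HV' HE' where P: "rbfs_process q u s (Q, lev, HV, HE) = (Q', lev', HV', HE')"
        by (metis prod_cases4)
      then show ?thesis using process_HE[OF P] True by auto
    qed
    then show ?thesis using True by (simp add: measure_pmf.emeasure_space_1)
  next
    case False
    define A where "A = sumT q E e lev Q + real k * Jp q E e D u"
    have A0: "0 \<le> A" unfolding A_def using sumT_nonneg[of q E e lev Q] Jp_nonneg[of q E e D u] by simp
    have "(\<integral>\<^sup>+s. Psi q E e D u k (rbfs_process q u s (Q, lev, HV, HE)) \<partial>rn_query E u)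
       \<le> (\<integral>\<^sup>+s. ennreal (gq q E e D u A s) \<partial>rn_query E u)"
      unfolding A_def by (intro nn_integral_mono Psi_process[where lev=lev and u=u, OF assms(1) Suc.prems False])
    also have "\<dots> = ennreal (if nbrs E u = {} then gq q E e D u A None
        else (\<Sum>s\<in>nbrs E u. gq q E e D u A (Some s)) / card (nbrs E u))"
      by (rule rn_int[OF assms(2) gq_nonneg[OF A0]])
    also have "\<dots> \<le> ennreal (A + Jp q E e D u)"
    proof (cases "nbrs E u = {}")
      case True then show ?thesis using Jp_nonneg[of q E e D u] by (simp add: gq_def ennreal_leI)
    next
      case F2: False
      have c: "0 < real (card (nbrs E u))" using F2 assms(2) by (simp add: card_gt_0_iff)
      have "(\<Sum>s\<in>nbrs E u. gq q E e D u A (Some s)) = 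
          real (card (nbrs E u)) * A + (\<Sum>s\<in>nbrs E u. (if {u,s} = e then 1 else 0) + Tp q E e D s)"
        by (simp add: gq_def sum.distrib)
      then have "(\<Sum>s\<in>nbrs E u. gq q E e D u A (Some s)) / card (nbrs E u) = A + Jp q E e D u"
        using c F2 by (simp add: Jp_def add_divide_distrib)
      then show ?thesis using F2 by simp
    qed
    also have "\<dots> = Psi q E e D u (Suc k) (Q, lev, HV, HE)"
      using False by (simp add: A_def algebra_simps)
    finally show ?thesis .
  qed
  finally show ?case .
qed

lemma dep_pos: "q > 0 \<Longrightarrow> dep q l \<ge> 1"
  by (auto simp: dep_def split: option.splits)

lemma step_bound:
  assumes "q > 0" "\<And>w. finite (nbrs E w)"
  shows "(\<integral>\<^sup>+x. Phi q E e x \<partial>rbfs_step q E st) \<le> Phi q E e st"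
proof -
  obtain Q lev HV HE where st: "st = (Q, lev, HV, HE)" by (metis prod_cases4)
  show ?thesis
  proof (cases Q)
    case Nil then show ?thesis using st by simp
  next
    case (Cons u Q')
    define D where "D = dep q (lev u) - 1"
    have D: "dep q (lev u) = Suc D" unfolding D_def using dep_pos[OF assms(1), of "lev u"] by simp
    have "(\<integral>\<^sup>+x. Phi q E e x \<partial>rbfs_step q E st) = (\<integral>\<^sup>+x. Phi q E e x \<partial>rbfs_queries q E u q (Q', lev, HV, HE))"
      using st Cons by simp
    also have "\<dots> \<le> Psi q E e D u q (Q', lev, HV, HE)"
      by (rule queries_bound[where lev=lev and u=u, OF assms(1) assms(2) D])
    also have "\<dots> = Phi q E e st"
      using st Cons D by (simp only: Psi.simps Phi.simps sumT_def list.map sum_list.Cons Tp_Suc) (simp add: algebra_simps)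
    finally show ?thesis .
  qed
qed

definition indE :: "'a set \<Rightarrow> 'a rbfs_state \<Rightarrow> ennreal" where
  "indE e x = (if e \<in> snd (snd (snd x)) then 1 else 0)"

lemma indE_le_Phi: "indE e x \<le> Phi q E e x"
  by (cases x) (auto simp: indE_def)

lemma iter_bound:
  assumes "q > 0" "\<And>w. finite (nbrs E w)"
  shows "(\<integral>\<^sup>+x. indE e x \<partial>rbfs_iter q E k st) \<le> Phi q E e st"
proof (induction k arbitrary: st)
  case 0
  then show ?case by (simp add: indE_le_Phi)
next
  case (Suc k)
  have "(\<integral>\<^sup>+x. indE e x \<partial>rbfs_iter q E (Suc k) st)
     = (\<integral>\<^sup>+y. (\<integral>\<^sup>+x. indE e x \<partial>rbfs_iter q E k y) \<partial>rbfs_step q E st)" by (simp only: rbfs_iter.simps nn_integral_bind_pmf)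
  also have "\<dots> \<le> (\<integral>\<^sup>+y. Phi q E e y \<partial>rbfs_step q E st)"
    by (intro nn_integral_mono Suc.IH)
  also have "\<dots> \<le> Phi q E e st" by (rule step_bound[OF assms])
  finally show ?case .
qed

lemma rbfs_edge_bound:
  assumes "q > 0" "\<And>w. finite (nbrs E w)"
  shows "emeasure (measure_pmf (q_rbfs q V E v)) {H. e \<in> snd H} \<le> ennreal (Tp q E e q v)"
proof -
  let ?st = "([v], (\<lambda>_. None)(v := Some 0), {v}, {}) :: 'a rbfs_state"
  have "emeasure (measure_pmf (q_rbfs q V E v)) {H. e \<in> snd H}
      = emeasure (measure_pmf (rbfs_iter q E (card V + 1) ?st)) {x. e \<in> snd (snd (snd x))}"
    unfolding q_rbfs_def by (simp add: case_prod_beta vimage_def)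
  also have "\<dots> = (\<integral>\<^sup>+x. indE e x \<partial>rbfs_iter q E (card V + 1) ?st)"
    by (subst nn_integral_indicator[symmetric]) (auto intro!: nn_integral_cong simp: indE_def indicator_def)
  also have "\<dots> \<le> Phi q E e ?st" by (rule iter_bound[OF assms])
  also have "\<dots> = ennreal (Tp q E e q v)"
    using assms(1) by (simp add: sumT_def dep_def del: Tp.simps)
  finally show ?thesis .
qed



lemma nbrs_sub: "simple_graph V E \<Longrightarrow> nbrs E w \<subseteq> V"
proof
  fix s assume G: "simple_graph V E" and s: "s \<in> nbrs E w"
  then have "{w, s} \<in> E" by (simp add: nbrs_def)
  then obtain a b where "a \<in> V" "b \<in> V" "{w, s} = {a, b}" using G unfolding simple_graph_def by blast
  then show "s \<in> V" by (auto simp: doubleton_eq_iff)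
qed

lemma nbrs_fin: "simple_graph V E \<Longrightarrow> finite (nbrs E w)"
  using nbrs_sub[of V E w] finite_subset unfolding simple_graph_def by blast

lemma nbrs_sym: "s \<in> nbrs E w \<longleftrightarrow> w \<in> nbrs E s"
  unfolding nbrs_def by (simp add: insert_commute)

definition kk :: "'a set set \<Rightarrow> ('a \<Rightarrow> real) \<Rightarrow> 'a \<Rightarrow> real" where
  "kk E m w = (if nbrs E w = {} then 0 else m w / card (nbrs E w))"

definition mm :: "'a set \<Rightarrow> 'a set set \<Rightarrow> ('a \<Rightarrow> real) \<Rightarrow> 'a \<Rightarrow> real" where
  "mm V E m s = (\<Sum>w\<in>{w. w \<in> V \<and> s \<in> nbrs E w}. kk E m w)"

lemma decomp:
  assumes G: "simple_graph V E"
  shows "(\<Sum>w\<in>V. m w * Jp q E e D w) =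
     (\<Sum>w\<in>V. \<Sum>s\<in>nbrs E w. kk E m w * (if {w,s} = e then 1 else 0)) + (\<Sum>s\<in>V. mm V E m s * Tp q E e D s)"
proof -
  have fV: "finite V" using G by (simp add: simple_graph_def)
  have 1: "m w * Jp q E e D w = (\<Sum>s\<in>nbrs E w. kk E m w * ((if {w,s} = e then 1 else 0) + Tp q E e D s))" for w
    by (simp add: Jp_def kk_def sum_distrib_left sum_divide_distrib)
  have 2: "(\<Sum>w\<in>V. \<Sum>s\<in>nbrs E w. kk E m w * Tp q E e D s) = (\<Sum>s\<in>V. mm V E m s * Tp q E e D s)"
  proof -
    have "(\<Sum>w\<in>V. \<Sum>s\<in>nbrs E w. kk E m w * Tp q E e D s) = (\<Sum>w\<in>V. \<Sum>s\<in>{s. s \<in> V \<and> s \<in> nbrs E w}. kk E m w * Tp q E e D s)"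
    proof -
      have eqN: "nbrs E w = {s. s \<in> V \<and> s \<in> nbrs E w}" for w using nbrs_sub[OF G, of w] by blast
      show ?thesis by (intro sum.cong[OF refl] sum.cong[OF eqN]) simp
    qed
    also have "\<dots> = (\<Sum>s\<in>V. \<Sum>w\<in>{w. w \<in> V \<and> s \<in> nbrs E w}. kk E m w * Tp q E e D s)"
      by (rule sum.swap_restrict[OF fV fV])
    also have "\<dots> = (\<Sum>s\<in>V. mm V E m s * Tp q E e D s)"
      by (simp add: mm_def sum_distrib_right)
    finally show ?thesis .
  qed
  have "(\<Sum>w\<in>V. m w * Jp q E e D w) = (\<Sum>w\<in>V. \<Sum>s\<in>nbrs E w. kk E m w * ((if {w,s} = e then 1 else 0) + Tp q E e D s))"
    by (rule sum.cong[OF refl 1])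
  also have "\<dots> = (\<Sum>w\<in>V. (\<Sum>s\<in>nbrs E w. kk E m w * (if {w,s} = e then 1 else 0)) + (\<Sum>s\<in>nbrs E w. kk E m w * Tp q E e D s))"
    by (simp only: distrib_left sum.distrib)
  also have "\<dots> = (\<Sum>w\<in>V. \<Sum>s\<in>nbrs E w. kk E m w * (if {w,s} = e then 1 else 0)) + (\<Sum>w\<in>V. \<Sum>s\<in>nbrs E w. kk E m w * Tp q E e D s)"
    by (simp only: sum.distrib)
  finally show ?thesis unfolding 2 .
qed

lemma kk_nonneg: "(\<And>w. 0 \<le> m w) \<Longrightarrow> 0 \<le> kk E m w"
  by (simp add: kk_def)

lemma kk_card:
  fixes m :: "'a \<Rightarrow> real"
  assumes "finite (nbrs E w)"
  shows "kk E m w * card (nbrs E w) = (if nbrs E w = {} then 0 else m w)"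
  using assms by (auto simp: kk_def card_gt_0_iff)

lemma ind_dbl: "(if {w,s} = {x,y} then 1 else 0) \<le> (if w = x \<and> s = y then 1 else 0) + (if w = y \<and> s = x then (1::real) else 0)"
proof (cases "{w,s} = {x,y}")
  case True
  have L: "(if {w,s} = {x,y} then 1 else 0) = (1::real)" by (rule if_P[OF True])
  have n1: "0 \<le> (if w = x \<and> s = y then 1 else (0::real))" by simp
  have n2: "0 \<le> (if w = y \<and> s = x then 1 else (0::real))" by simp
  from True have "(w = x \<and> s = y) \<or> (w = y \<and> s = x)" by (simp only: doubleton_eq_iff)
  then show ?thesis
  proof
    assume h: "w = x \<and> s = y"
    have "(if w = x \<and> s = y then 1 else (0::real)) = 1" by (rule if_P[OF h])
    then show ?thesis using L n2 by linarith
  next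
    assume h: "w = y \<and> s = x"
    have "(if w = y \<and> s = x then 1 else (0::real)) = 1" by (rule if_P[OF h])
    then show ?thesis using L n1 by linarith
  qed
next
  case False
  have "(if {w,s} = {x,y} then 1 else 0) = (0::real)" by (rule if_not_P[OF False])
  moreover have "0 \<le> (if w = x \<and> s = y then 1 else (0::real))" by simp
  moreover have "0 \<le> (if w = y \<and> s = x then 1 else (0::real))" by simp
  ultimately show ?thesis by linarith
qed

lemma dsum:
  assumes "finite V"
  shows "(\<Sum>w\<in>V. \<Sum>s\<in>V. (if w = a \<and> s = b then 1 else 0::real)) = (if a \<in> V \<and> b \<in> V then 1 else 0)"
proof -
  have "(\<Sum>s\<in>V. (if w = a \<and> s = b then 1 else 0::real)) = (if w = a \<and> b \<in> V then 1 else 0)" for w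
    using assms by (cases "w = a") simp_all
  then have "(\<Sum>w\<in>V. \<Sum>s\<in>V. (if w = a \<and> s = b then 1 else 0::real)) = (\<Sum>w\<in>V. (if w = a then (if b \<in> V then 1 else 0) else 0::real))"
    by (intro sum.cong refl) auto
  also have "\<dots> = (if a \<in> V \<and> b \<in> V then 1 else 0)"
    using assms by simp
  finally show ?thesis .
qed

primrec Ssum :: "nat \<Rightarrow> nat \<Rightarrow> real" where
  "Ssum q 0 = 0"
| "Ssum q (Suc D) = real q * (1 + Ssum q D)"

lemma lemA:
  fixes m :: "'a \<Rightarrow> real" and c :: real
  assumes G: "simple_graph V E" and e: "e = {x, y}" and c: "0 \<le> c"
    and m0: "\<And>w. 0 \<le> m w" and mc: "\<And>w. w \<in> V \<Longrightarrow> nbrs E w \<noteq> {} \<Longrightarrow> m w \<le> c * card (nbrs E w)"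
  shows "(\<Sum>w\<in>V. m w * Tp q E e D w) \<le> 2 * c * Ssum q D"
  using m0 mc
proof (induction D arbitrary: m)
  case 0 then show ?case by simp
next
  case (Suc D)
  have fV: "finite V" using G by (simp add: simple_graph_def)
  have kc: "kk E m w \<le> c" if "w \<in> V" for w
  proof (cases "nbrs E w = {}")
    case True then show ?thesis using c by (simp add: kk_def)
  next
    case False
    have "0 < real (card (nbrs E w))" using False nbrs_fin[OF G] by (simp add: card_gt_0_iff)
    then show ?thesis using Suc.prems(2)[OF that False] c False by (simp add: kk_def divide_le_eq)
  qed
  have T1: "(\<Sum>w\<in>V. \<Sum>s\<in>nbrs E w. kk E m w * (if {w,s} = e then 1 else 0)) \<le> 2 * c"
  proof -
    have "(\<Sum>w\<in>V. \<Sum>s\<in>nbrs E w. kk E m w * (if {w,s} = e then 1 else 0))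
       \<le> (\<Sum>w\<in>V. \<Sum>s\<in>V. c * (if {w,s} = e then 1 else 0))"
    proof (intro sum_mono)
      fix w assume w: "w \<in> V"
      have "(\<Sum>s\<in>nbrs E w. kk E m w * (if {w,s} = e then 1 else 0)) \<le> (\<Sum>s\<in>nbrs E w. c * (if {w,s} = e then 1 else 0))"
        by (intro sum_mono) (use kc[OF w] in auto)
      also have "\<dots> \<le> (\<Sum>s\<in>V. c * (if {w,s} = e then 1 else 0))"
        by (intro sum_mono2 fV nbrs_sub[OF G]) (use c in auto)
      finally show "(\<Sum>s\<in>nbrs E w. kk E m w * (if {w,s} = e then 1 else 0)) \<le> (\<Sum>s\<in>V. c * (if {w,s} = e then 1 else 0))" .
    qed
    also have "\<dots> \<le> (\<Sum>w\<in>V. \<Sum>s\<in>V. c * ((if w = x \<and> s = y then 1 else 0) + (if w = y \<and> s = x then 1 else 0)))"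
      unfolding e by (intro sum_mono mult_left_mono c ind_dbl)
    also have "\<dots> = c * ((if x \<in> V \<and> y \<in> V then 1 else 0) + (if x \<in> V \<and> y \<in> V then 1 else 0))"
    proof -
      have "(\<Sum>w\<in>V. \<Sum>s\<in>V. c * ((if w = x \<and> s = y then 1 else 0) + (if w = y \<and> s = x then 1 else 0)))
         = c * ((\<Sum>w\<in>V. \<Sum>s\<in>V. (if w = x \<and> s = y then 1 else 0)) + (\<Sum>w\<in>V. \<Sum>s\<in>V. (if w = y \<and> s = x then 1 else 0)))"
        by (simp only: distrib_left sum.distrib sum_distrib_left)
      then show ?thesis unfolding dsum[OF fV] by (simp add: conj_commute)
    qed
    also have "\<dots> \<le> 2 * c" using c by auto
    finally show ?thesis .
  qed
  have mm_ok: "mm V E m s \<le> c * card (nbrs E s)" if "s \<in> V" "nbrs E s \<noteq> {}" for s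
  proof -
    have eq: "{w. w \<in> V \<and> s \<in> nbrs E w} = nbrs E s"
    proof (intro set_eqI iffI)
      fix w assume "w \<in> {w. w \<in> V \<and> s \<in> nbrs E w}"
      then show "w \<in> nbrs E s" using nbrs_sym[of s E w] by simp
    next
      fix w assume "w \<in> nbrs E s"
      then show "w \<in> {w. w \<in> V \<and> s \<in> nbrs E w}" using nbrs_sym[of s E w] nbrs_sub[OF G, of s] by auto
    qed
    have "mm V E m s \<le> (\<Sum>w\<in>nbrs E s. c)"
      unfolding mm_def eq by (intro sum_mono kc) (use nbrs_sub[OF G] in auto)
    then show ?thesis by (simp add: mult.commute)
  qed
  have mm0: "0 \<le> mm V E m s" for s
    unfolding mm_def by (intro sum_nonneg kk_nonneg Suc.prems(1))
  have IH: "(\<Sum>s\<in>V. mm V E m s * Tp q E e D s) \<le> 2 * c * Ssum q D"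
    by (rule Suc.IH) (use mm0 mm_ok in auto)
  have "(\<Sum>w\<in>V. m w * Tp q E e (Suc D) w) = real q * (\<Sum>w\<in>V. m w * Jp q E e D w)"
    by (simp only: Tp_Suc sum_distrib_left mult.left_commute)
  also have "\<dots> \<le> real q * (2 * c + 2 * c * Ssum q D)"
    unfolding decomp[OF G] by (intro mult_left_mono add_mono T1 IH) auto
  also have "\<dots> = 2 * c * Ssum q (Suc D)" by (simp add: algebra_simps)
  finally show ?case .
qed



lemma E_fin: "simple_graph V E \<Longrightarrow> finite E"
proof -
  assume G: "simple_graph V E"
  have "E \<subseteq> Pow V"
  proof
    fix e assume "e \<in> E"
    then obtain a b where "a \<in> V" "b \<in> V" "e = {a, b}" using G unfolding simple_graph_def by blast
    then show "e \<in> Pow V" by blast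
  qed
  then show ?thesis using G finite_subset unfolding simple_graph_def by (metis finite_Pow_iff)
qed

lemma Ssum_nonneg: "0 \<le> Ssum q D"
  by (induction D) auto

lemma mm_sum:
  fixes m :: "'a \<Rightarrow> real"
  assumes G: "simple_graph V E" and m0: "\<And>w. 0 \<le> m w"
  shows "(\<Sum>s\<in>V. mm V E m s) \<le> (\<Sum>w\<in>V. m w)"
proof -
  have fV: "finite V" using G by (simp add: simple_graph_def)
  have "(\<Sum>s\<in>V. mm V E m s) = (\<Sum>w\<in>V. \<Sum>s\<in>{s. s \<in> V \<and> s \<in> nbrs E w}. kk E m w)"
    unfolding mm_def by (rule sum.swap_restrict[OF fV fV, symmetric])
  also have "\<dots> = (\<Sum>w\<in>V. kk E m w * card (nbrs E w))"
  proof (intro sum.cong refl)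
    fix w
    have "{s. s \<in> V \<and> s \<in> nbrs E w} = nbrs E w" using nbrs_sub[OF G, of w] by blast
    then show "(\<Sum>s\<in>{s. s \<in> V \<and> s \<in> nbrs E w}. kk E m w) = kk E m w * card (nbrs E w)" by simp
  qed
  also have "\<dots> \<le> (\<Sum>w\<in>V. m w)"
    by (intro sum_mono) (simp add: kk_card[OF nbrs_fin[OF G]] m0)
  finally show ?thesis .
qed

lemma lemB:
  fixes m :: "'a \<Rightarrow> real"
  assumes G: "simple_graph V E" and m0: "\<And>w. 0 \<le> m w"
  shows "(\<Sum>e\<in>E. \<Sum>w\<in>V. m w * Tp q E e D w) \<le> (\<Sum>w\<in>V. m w) * Ssum q D"
  using m0
proof (induction D arbitrary: m)
  case 0 then show ?case by simp
next
  case (Suc D)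
  have fV: "finite V" using G by (simp add: simple_graph_def)
  have fE: "finite E" by (rule E_fin[OF G])
  have mm0: "0 \<le> mm V E m s" for s
    unfolding mm_def by (intro sum_nonneg kk_nonneg Suc.prems(1))
  have IH: "(\<Sum>e\<in>E. \<Sum>s\<in>V. mm V E m s * Tp q E e D s) \<le> (\<Sum>s\<in>V. mm V E m s) * Ssum q D"
    by (rule Suc.IH) (use mm0 in auto)
  have IH2: "(\<Sum>e\<in>E. \<Sum>s\<in>V. mm V E m s * Tp q E e D s) \<le> (\<Sum>w\<in>V. m w) * Ssum q D"
  proof -
    have ms: "(\<Sum>s\<in>V. mm V E m s) \<le> (\<Sum>w\<in>V. m w)" by (rule mm_sum[OF G]) (rule Suc.prems)
    show ?thesis using IH mult_right_mono[OF ms Ssum_nonneg[of q D]] by linarith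
  qed
  have T1: "(\<Sum>e\<in>E. \<Sum>w\<in>V. \<Sum>s\<in>nbrs E w. kk E m w * (if {w,s} = e then 1 else 0)) \<le> (\<Sum>w\<in>V. m w)"
  proof -
    have "(\<Sum>e\<in>E. \<Sum>w\<in>V. \<Sum>s\<in>nbrs E w. kk E m w * (if {w,s} = e then 1 else 0))
        = (\<Sum>w\<in>V. \<Sum>e\<in>E. \<Sum>s\<in>nbrs E w. kk E m w * (if {w,s} = e then 1 else 0))"
      by (rule sum.swap)
    also have "\<dots> = (\<Sum>w\<in>V. \<Sum>s\<in>nbrs E w. \<Sum>e\<in>E. kk E m w * (if {w,s} = e then 1 else 0))"
      by (intro sum.cong refl sum.swap)
    also have "\<dots> = (\<Sum>w\<in>V. \<Sum>s\<in>nbrs E w. kk E m w)"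
    proof (intro sum.cong refl)
      fix w s assume "s \<in> nbrs E w"
      then have "{w,s} \<in> E" by (simp add: nbrs_def)
      then show "(\<Sum>e\<in>E. kk E m w * (if {w,s} = e then 1 else 0)) = kk E m w"
      proof -
        assume "{w,s} \<in> E"
        have "(\<Sum>e\<in>E. if {w,s} = e then 1 else (0::real)) = 1"
          using sum.delta'[OF fE, of "{w,s}" "\<lambda>_. 1::real"] \<open>{w,s} \<in> E\<close> by simp
        then show ?thesis by (simp add: sum_distrib_left[symmetric])
      qed
    qed
    also have "\<dots> = (\<Sum>w\<in>V. kk E m w * card (nbrs E w))" by (simp add: mult.commute)
    also have "\<dots> \<le> (\<Sum>w\<in>V. m w)"
      by (intro sum_mono) (simp add: kk_card[OF nbrs_fin[OF G]] Suc.prems(1))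
    finally show ?thesis .
  qed
  have "(\<Sum>e\<in>E. \<Sum>w\<in>V. m w * Tp q E e (Suc D) w) = real q * (\<Sum>e\<in>E. \<Sum>w\<in>V. m w * Jp q E e D w)"
    by (simp only: Tp_Suc sum_distrib_left mult.left_commute)
  also have "\<dots> = real q * ((\<Sum>e\<in>E. \<Sum>w\<in>V. \<Sum>s\<in>nbrs E w. kk E m w * (if {w,s} = e then 1 else 0))
      + (\<Sum>e\<in>E. \<Sum>s\<in>V. mm V E m s * Tp q E e D s))"
    by (simp only: decomp[OF G] sum.distrib)
  also have "\<dots> \<le> real q * ((\<Sum>w\<in>V. m w) + (\<Sum>w\<in>V. m w) * Ssum q D)"
    by (intro mult_left_mono add_mono T1 IH2) auto
  also have "\<dots> = (\<Sum>w\<in>V. m w) * Ssum q (Suc D)" by (simp add: algebra_simps)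
  finally show ?case .
qed



lemma Ssum_c: "Ssum q D + 1 = (\<Sum>i\<le>D. real q ^ i)"
proof (induction D)
  case 0 then show ?case by simp
next
  case (Suc D)
  have "(\<Sum>i\<le>Suc D. real q ^ i) = 1 + (\<Sum>i\<le>D. real q ^ Suc i)"
    by (subst sum.atMost_Suc_shift) simp
  also have "\<dots> = 1 + real q * (\<Sum>i\<le>D. real q ^ i)"
    by (simp add: sum_distrib_left)
  finally show ?case using Suc.IH by (simp add: algebra_simps)
qed

lemma Tp_notE: "simple_graph V E \<Longrightarrow> e \<notin> E \<Longrightarrow> Tp q E e D w = 0"
proof (induction D arbitrary: w)
  case 0 then show ?case by simp
next
  case (Suc D)
  have "(\<Sum>s\<in>nbrs E w. (if {w,s} = e then 1 else 0) + Tp q E e D s) = 0"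
  proof (intro sum.neutral ballI)
    fix s assume "s \<in> nbrs E w"
    then have "{w,s} \<in> E" by (simp add: nbrs_def)
    then have "{w,s} \<noteq> e" using Suc.prems(2) by auto
    then show "(if {w,s} = e then 1 else 0) + Tp q E e D s = 0" using Suc by simp
  qed
  then show ?case by simp
qed

lemma emeasure_D:
  assumes G: "simple_graph V E" and q: "q > 0" and V: "V \<noteq> {}"
  shows "measure_pmf.prob (bind_pmf (pmf_of_set V) (q_rbfs q V E)) {H. e \<in> snd H}
     \<le> (\<Sum>u\<in>V. Tp q E e q u) / card V"
proof -
  have fV: "finite V" using G by (simp add: simple_graph_def)
  have "emeasure (measure_pmf (bind_pmf (pmf_of_set V) (q_rbfs q V E))) {H. e \<in> snd H}
      = (\<integral>\<^sup>+u. emeasure (measure_pmf (q_rbfs q V E u)) {H. e \<in> snd H} \<partial>pmf_of_set V)"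
    by simp
  also have "\<dots> \<le> (\<integral>\<^sup>+u. ennreal (Tp q E e q u) \<partial>pmf_of_set V)"
    by (intro nn_integral_mono rbfs_edge_bound q nbrs_fin[OF G])
  also have "\<dots> = (\<Sum>u\<in>V. ennreal (Tp q E e q u)) / card V"
    using fV V by (simp add: nn_integral_pmf_of_set)
  also have "\<dots> = ennreal ((\<Sum>u\<in>V. Tp q E e q u) / card V)"
  proof -
    have c: "0 < real (card V)" using fV V by (simp add: card_gt_0_iff)
    have "0 \<le> (\<Sum>u\<in>V. Tp q E e q u)" by (intro sum_nonneg Tp_nonneg)
    then show ?thesis using c
      by (subst sum_ennreal) (auto simp: divide_ennreal Tp_nonneg ennreal_of_nat_eq_real_of_nat)
  qed
  finally have "emeasure (measure_pmf (bind_pmf (pmf_of_set V) (q_rbfs q V E))) {H. e \<in> snd H}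
     \<le> ennreal ((\<Sum>u\<in>V. Tp q E e q u) / card V)" .
  moreover have "0 \<le> (\<Sum>u\<in>V. Tp q E e q u) / card V" by (intro divide_nonneg_nonneg sum_nonneg Tp_nonneg) simp
  ultimately show ?thesis
    by (simp add: measure_pmf.emeasure_eq_measure)
qed



theorem lemma3p8:
  fixes V :: "'a set" and E :: "'a set set" and n q :: nat and \<alpha> :: real
  assumes "simple_graph V E" and "card V = n"
    and "q > 0" and "0 < \<alpha>" and "\<alpha> \<le> 1"
    and "real n \<ge> real q * c_q q / \<alpha>\<^sup>2"
  shows "measure_pmf.prob
           (bind_pmf (pmf_of_set V) (\<lambda>u. bind_pmf (pmf_of_set V) (\<lambda>v.
              bind_pmf (q_rbfs q V E u) (\<lambda>Hu. bind_pmf (q_rbfs q V E v) (\<lambda>Hv.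
                return_pmf (Hu, Hv))))))
           {(Hu, Hv). snd Hu \<inter> snd Hv = {}}
         \<ge> 1 - 2 * \<alpha> * real q * c_q q"
proof -
  note G = assms(1)
  have fV: "finite V" using G by (simp add: simple_graph_def)
  have fE: "finite E" by (rule E_fin[OF G])
  define S where "S = Ssum q q"
  define c where "c = c_q q"
  have Sc: "S + 1 = c" unfolding S_def c_def c_q_def by (rule Ssum_c)
  have S0: "0 \<le> S" unfolding S_def by (rule Ssum_nonneg)
  have c0: "0 < c" using Sc S0 by linarith
  have qc0: "0 < real q * c" using c0 assms(3) by simp
  have a2: "0 < \<alpha>\<^sup>2" using assms(4) by simp
  have nbig: "real q * c \<le> real n * \<alpha>\<^sup>2"
    using assms(6) a2 unfolding c_def by (simp add: divide_le_eq)
  have n0: "0 < real n"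
  proof -
    have "0 < real n * \<alpha>\<^sup>2" using nbig qc0 by linarith
    then show ?thesis using a2 by (simp add: zero_less_mult_iff)
  qed
  have V: "V \<noteq> {}" using n0 assms(2) by auto
  define Dd where "Dd = bind_pmf (pmf_of_set V) (q_rbfs q V E)"
  define p where "p e = measure_pmf.prob Dd {H. e \<in> snd H}" for e
  have p0: "0 \<le> p e" for e unfolding p_def by simp
  have pT: "p e \<le> (\<Sum>w\<in>V. (1 / real n) * Tp q E e q w)" for e
  proof -
    have "p e \<le> (\<Sum>u\<in>V. Tp q E e q u) / card V"
      unfolding p_def Dd_def by (rule emeasure_D[OF G assms(3) V])
    also have "\<dots> = (\<Sum>w\<in>V. (1 / real n) * Tp q E e q w)"
      using assms(2) by (simp add: sum_divide_distrib)
    finally show ?thesis .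
  qed
  have pmax: "p e \<le> 2 * (1 / real n) * S" if "e \<in> E" for e
  proof -
    have h: "\<forall>e\<in>E. \<exists>x y. x \<noteq> y \<and> x \<in> V \<and> y \<in> V \<and> e = {x, y}"
      using G unfolding simple_graph_def by (rule conjunct2)
    have "\<exists>x y. x \<noteq> y \<and> x \<in> V \<and> y \<in> V \<and> e = {x, y}" using h that by (rule bspec)
    then obtain x y where e: "e = {x, y}" by (elim exE conjE)
    have "(\<Sum>w\<in>V. (1 / real n) * Tp q E e q w) \<le> 2 * (1 / real n) * S"
      unfolding S_def
    proof (rule lemA[OF G e])
      show "0 \<le> 1 / real n" by simp
      show "\<And>w. 0 \<le> 1 / real n" by simp
      fix w assume "w \<in> V" "nbrs E w \<noteq> {}"
      then have "1 \<le> card (nbrs E w)" using nbrs_fin[OF G, of w] by (simp add: Suc_le_eq card_gt_0_iff)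
      then show "1 / real n \<le> 1 / real n * real (card (nbrs E w))"
        using n0 by (simp add: divide_le_eq)
    qed
    then show ?thesis using pT[of e] by linarith
  qed
  have psum: "(\<Sum>e\<in>E. p e) \<le> S"
  proof -
    have "(\<Sum>e\<in>E. p e) \<le> (\<Sum>e\<in>E. \<Sum>w\<in>V. (1 / real n) * Tp q E e q w)"
      by (intro sum_mono pT)
    also have "\<dots> \<le> (\<Sum>w\<in>V. 1 / real n) * S"
      unfolding S_def by (rule lemB[OF G]) simp
    also have "(\<Sum>w\<in>V. 1 / real n) = 1" using assms(2) n0 by simp
    finally show ?thesis by simp
  qed
  have supp: "snd x \<subseteq> E" if x: "x \<in> set_pmf Dd" for x
  proof
    fix e assume ex: "e \<in> snd x"
    show "e \<in> E"
    proof (rule ccontr)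
      assume "e \<notin> E"
      then have "p e \<le> 0" using pT[of e] Tp_notE[OF G] by simp
      moreover have "pmf Dd x \<le> p e"
      proof -
        have "pmf Dd x = measure_pmf.prob Dd {x}" by (simp add: measure_pmf_single)
        also have "\<dots> \<le> p e" unfolding p_def
          by (rule measure_pmf.finite_measure_mono) (use ex in auto)
        finally show ?thesis .
      qed
      moreover have "0 < pmf Dd x" using x by (simp add: pmf_positive)
      ultimately show False by linarith
    qed
  qed
  define J where "J = bind_pmf (pmf_of_set V) (\<lambda>u. bind_pmf (pmf_of_set V) (\<lambda>v.
              bind_pmf (q_rbfs q V E u) (\<lambda>Hu. bind_pmf (q_rbfs q V E v) (\<lambda>Hv.
                return_pmf (Hu, Hv)))))"
  have J_eq: "J = pair_pmf Dd Dd"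
  proof -
    have "pair_pmf Dd Dd = bind_pmf (pmf_of_set V) (\<lambda>u. bind_pmf (q_rbfs q V E u) (\<lambda>Hu.
        bind_pmf (pmf_of_set V) (\<lambda>v. bind_pmf (q_rbfs q V E v) (\<lambda>Hv. return_pmf (Hu, Hv)))))"
      unfolding pair_pmf_def Dd_def by (simp add: bind_assoc_pmf)
    also have "\<dots> = J"
      unfolding J_def by (subst bind_commute_pmf) (rule refl)
    finally show ?thesis by simp
  qed
  define A where "A e = {H. e \<in> snd H} \<inter> set_pmf Dd" for e
  have pA: "measure_pmf.prob Dd (A e) = p e" for e
    unfolding A_def p_def by (rule measure_Int_set_pmf)
  have bad: "measure_pmf.prob J {(Hu, Hv). snd Hu \<inter> snd Hv \<noteq> {}} \<le> 2 * (1 / real n) * S * S"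
  proof -
    let ?B = "{(Hu, Hv). snd Hu \<inter> snd Hv \<noteq> {}}"
    have "measure_pmf.prob J ?B = measure_pmf.prob J (?B \<inter> set_pmf J)"
      by (rule measure_Int_set_pmf[symmetric])
    also have "\<dots> \<le> measure_pmf.prob J (\<Union>e\<in>E. A e \<times> A e)"
    proof (rule measure_pmf.finite_measure_mono)
      show "?B \<inter> set_pmf J \<subseteq> (\<Union>e\<in>E. A e \<times> A e)"
      proof
        fix z assume z: "z \<in> ?B \<inter> set_pmf J"
        obtain a b where zab: "z = (a, b)" by (cases z)
        have ab: "a \<in> set_pmf Dd" "b \<in> set_pmf Dd" using z zab J_eq by auto
        obtain e where e: "e \<in> snd a" "e \<in> snd b" using z zab by auto
        have "e \<in> E" using supp[OF ab(1)] e by auto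
        then show "z \<in> (\<Union>e\<in>E. A e \<times> A e)" using e ab zab unfolding A_def by auto
      qed
    qed simp
    also have "\<dots> \<le> (\<Sum>e\<in>E. measure_pmf.prob J (A e \<times> A e))"
      by (rule measure_pmf.finite_measure_subadditive_finite[OF fE]) simp
    also have "\<dots> = (\<Sum>e\<in>E. p e * p e)"
    proof (intro sum.cong refl)
      fix e
      have cA: "countable (A e)" unfolding A_def by (rule countable_subset[OF _ countable_set_pmf]) auto
      show "measure_pmf.prob J (A e \<times> A e) = p e * p e"
        unfolding J_eq by (simp add: measure_pmf_prob_product[OF cA cA] pA)
    qed
    also have "\<dots> \<le> (\<Sum>e\<in>E. p e * (2 * (1 / real n) * S))"
      by (intro sum_mono mult_left_mono pmax p0)
    also have "\<dots> = (\<Sum>e\<in>E. p e) * (2 * (1 / real n) * S)"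
      by (rule sum_distrib_right[symmetric])
    also have "\<dots> \<le> S * (2 * (1 / real n) * S)"
      by (rule mult_right_mono[OF psum]) (use S0 n0 in simp)
    finally show ?thesis by (simp add: algebra_simps)
  qed
  have compl: "measure_pmf.prob J {(Hu, Hv). snd Hu \<inter> snd Hv = {}}
      = 1 - measure_pmf.prob J {(Hu, Hv). snd Hu \<inter> snd Hv \<noteq> {}}"
  proof -
    have eq: "{(Hu, Hv). snd Hu \<inter> snd Hv = {}} = UNIV - {(Hu, Hv). snd Hu \<inter> snd Hv \<noteq> {}}" by auto
    have "measure_pmf.prob J (UNIV - {(Hu, Hv). snd Hu \<inter> snd Hv \<noteq> {}}) = 1 - measure_pmf.prob J {(Hu, Hv). snd Hu \<inter> snd Hv \<noteq> {}}"
      using measure_pmf.prob_compl[of "{(Hu, Hv). snd Hu \<inter> snd Hv \<noteq> {}}" J] by simp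
    then show ?thesis unfolding eq .
  qed
  have num: "2 * (1 / real n) * S * S \<le> 2 * \<alpha> * real q * c"
  proof -
    have "c \<le> real q * c" using c0 assms(3) by simp
    also have "\<dots> \<le> real n * \<alpha>\<^sup>2" by (rule nbig)
    also have "\<dots> \<le> real n * \<alpha>"
      using n0 assms(4,5) by (simp add: power2_eq_square mult_left_le)
    also have "\<dots> \<le> real n * \<alpha> * real q"
      using n0 assms(3,4) by simp
    finally have cn: "c \<le> real n * \<alpha> * real q" .
    have "S * S \<le> c * c" using Sc S0 by (intro mult_mono) auto
    also have "\<dots> \<le> c * (real n * \<alpha> * real q)" using cn c0 by (intro mult_left_mono) auto
    finally have "S * S \<le> c * (real n * \<alpha> * real q)" .
    then have "S * S / real n \<le> c * \<alpha> * real q" using n0 by (simp add: divide_le_eq algebra_simps)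
    moreover have "2 * (1 / real n) * S * S = 2 * (S * S / real n)" by simp
    moreover have "2 * \<alpha> * real q * c = 2 * (c * \<alpha> * real q)" by simp
    ultimately show ?thesis by linarith
  qed
  show ?thesis
    using compl bad num unfolding J_def c_def by linarith
qed

end
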